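(* A finitely generated group $G$ admits a transitive translation-like action by $\mathbb{Z}$ if and only if $G$ has a Cayley graph admitting a bi-infinite Hamiltonian path.
   Context: A finitely generated group $G$ is given the word metric $d_S(g,h)=\min\{n : g^{-1}h\in (S\cup S^{-1})^n\}$ for a finite generating set $S$; all such metrics are bilipschitz equivalent, so the notion below does not depend on $S$. For a group $H$ and a metric space $(X,d)$, a right action $*$ of $H$ on $X$ is translation-like if it is free ($x*h=x$ implies $h=1_H$) and for every $h\in H$ the set $\{d(x,x*h): x\in X\}$ is bounded. A Cayley graph of $G$ means $\mathrm{Cay}(G;S)$ for a finite generating set $S$: vertex set $G$, with $g$ adjacent to $gs$ for $s\in S\cup S^{-1}$. A bi-infinite Hamiltonian path is a bijection $P:\mathbb{Z}\to V$ onto the vertex set with $P(i)$ adjacent to $P(i+1)$ for all $i$. *)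

theory Defs
  imports "HOL-Algebra.Algebra"
begin

definition fin_gen_set :: "('a, 'b) monoid_scheme \<Rightarrow> 'a set \<Rightarrow> bool" where
  "fin_gen_set G S \<longleftrightarrow> finite S \<and> S \<subseteq> carrier G \<and> generate G S = carrier G"

definition sym_gens :: "('a, 'b) monoid_scheme \<Rightarrow> 'a set \<Rightarrow> 'a set" where
  "sym_gens G S = S \<union> (\<lambda>s. inv\<^bsub>G\<^esub> s) ` S"

fun sym_pow :: "('a, 'b) monoid_scheme \<Rightarrow> 'a set \<Rightarrow> nat \<Rightarrow> 'a set" where
  "sym_pow G S 0 = {\<one>\<^bsub>G\<^esub>}"
| "sym_pow G S (Suc n) = {x \<otimes>\<^bsub>G\<^esub> s | x s. x \<in> sym_pow G S n \<and> s \<in> sym_gens G S}"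

definition word_dist :: "('a, 'b) monoid_scheme \<Rightarrow> 'a set \<Rightarrow> 'a \<Rightarrow> 'a \<Rightarrow> nat" where
  "word_dist G S g h = (LEAST n. inv\<^bsub>G\<^esub> g \<otimes>\<^bsub>G\<^esub> h \<in> sym_pow G S n)"

definition int_right_action :: "('a, 'b) monoid_scheme \<Rightarrow> ('a \<Rightarrow> int \<Rightarrow> 'a) \<Rightarrow> bool" where
  "int_right_action G act \<longleftrightarrow>
     (\<forall>x\<in>carrier G. \<forall>n. act x n \<in> carrier G) \<and>
     (\<forall>x\<in>carrier G. act x 0 = x) \<and>
     (\<forall>x\<in>carrier G. \<forall>m n. act x (m + n) = act (act x m) n)"

definition translation_like_Z ::
    "('a, 'b) monoid_scheme \<Rightarrow> ('a \<Rightarrow> 'a \<Rightarrow> nat) \<Rightarrow> ('a \<Rightarrow> int \<Rightarrow> 'a) \<Rightarrow> bool" where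
  "translation_like_Z G d act \<longleftrightarrow>
     int_right_action G act \<and>
     (\<forall>x\<in>carrier G. \<forall>n. act x n = x \<longrightarrow> n = 0) \<and>
     (\<forall>n. \<exists>B. \<forall>x\<in>carrier G. d x (act x n) \<le> B)"

definition transitive_Z_action :: "('a, 'b) monoid_scheme \<Rightarrow> ('a \<Rightarrow> int \<Rightarrow> 'a) \<Rightarrow> bool" where
  "transitive_Z_action G act \<longleftrightarrow> (\<forall>x\<in>carrier G. \<forall>y\<in>carrier G. \<exists>n. act x n = y)"

definition cay_adj :: "('a, 'b) monoid_scheme \<Rightarrow> 'a set \<Rightarrow> 'a \<Rightarrow> 'a \<Rightarrow> bool" where
  "cay_adj G S g h \<longleftrightarrow> g \<in> carrier G \<and> (\<exists>s\<in>sym_gens G S. h = g \<otimes>\<^bsub>G\<^esub> s)"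

definition biinf_ham_path :: "('a, 'b) monoid_scheme \<Rightarrow> 'a set \<Rightarrow> (int \<Rightarrow> 'a) \<Rightarrow> bool" where
  "biinf_ham_path G S P \<longleftrightarrow> bij_betw P UNIV (carrier G) \<and> (\<forall>i. cay_adj G S (P i) (P (i + 1)))"

end

theory Submission
  imports Defs
begin

context group
begin

lemma sg_carrier: "S \<subseteq> carrier G \<Longrightarrow> sym_gens G S \<subseteq> carrier G"
  unfolding sym_gens_def by auto

lemma sg_inv: "S \<subseteq> carrier G \<Longrightarrow> s \<in> sym_gens G S \<Longrightarrow> inv s \<in> sym_gens G S"
  unfolding sym_gens_def by (auto simp: subsetD)

lemma sp_carrier: "S \<subseteq> carrier G \<Longrightarrow> sym_pow G S n \<subseteq> carrier G"
proof (induction n)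
  case 0 then show ?case by simp
next
  case (Suc n) then show ?case using sg_carrier[OF Suc.prems] by auto
qed

lemma sp_finite: "finite S \<Longrightarrow> finite (sym_pow G S n)"
proof (induction n)
  case 0 then show ?case by simp
next
  case (Suc n)
  have fs: "finite (sym_gens G S)" using Suc.prems unfolding sym_gens_def by auto
  have "sym_pow G S (Suc n) = (\<lambda>(x,s). x \<otimes> s) ` (sym_pow G S n \<times> sym_gens G S)"
    by auto
  then show ?case using Suc fs by simp
qed

lemma sp_mult: "S \<subseteq> carrier G \<Longrightarrow> x \<in> sym_pow G S a \<Longrightarrow> y \<in> sym_pow G S b
   \<Longrightarrow> x \<otimes> y \<in> sym_pow G S (a + b)"
proof (induction b arbitrary: y)
  case 0
  then have "x \<in> carrier G" "y = \<one>" using sp_carrier[OF 0(1)] by auto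
  then show ?case using 0 by simp
next
  case (Suc b)
  then obtain y' s where y: "y = y' \<otimes> s" "y' \<in> sym_pow G S b" "s \<in> sym_gens G S" by auto
  have "x \<in> carrier G" "y' \<in> carrier G" "s \<in> carrier G"
    using y sp_carrier[OF Suc.prems(1)] sg_carrier[OF Suc.prems(1)] Suc.prems(2) by auto
  then have "x \<otimes> y = (x \<otimes> y') \<otimes> s" using y by (simp add: m_assoc)
  moreover have "x \<otimes> y' \<in> sym_pow G S (a + b)" using Suc y by auto
  ultimately show ?case using y by auto
qed

lemma sp_one: "S \<subseteq> carrier G \<Longrightarrow> s \<in> sym_gens G S \<Longrightarrow> s \<in> sym_pow G S 1"
  using sg_carrier[of S] by (auto intro!: exI[of _ \<one>] exI[of _ s])

lemma sp_inv: "S \<subseteq> carrier G \<Longrightarrow> x \<in> sym_pow G S n \<Longrightarrow> inv x \<in> sym_pow G S n"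
proof (induction n arbitrary: x)
  case 0 then show ?case by simp
next
  case (Suc n)
  then obtain y s where y: "x = y \<otimes> s" "y \<in> sym_pow G S n" "s \<in> sym_gens G S" by auto
  have c: "y \<in> carrier G" "s \<in> carrier G"
    using y sp_carrier[OF Suc.prems(1)] sg_carrier[OF Suc.prems(1)] by auto
  have "inv x = inv s \<otimes> inv y" using y c by (simp add: inv_mult_group)
  moreover have "inv s \<in> sym_pow G S 1" using sp_one[OF Suc.prems(1) sg_inv[OF Suc.prems(1) y(3)]] .
  moreover have "inv y \<in> sym_pow G S n" using Suc y by auto
  ultimately show ?case using sp_mult[OF Suc.prems(1), of "inv s" 1 "inv y" n] by simp
qed

lemma gen_sp: assumes "S \<subseteq> carrier G" "x \<in> generate G S" shows "\<exists>n. x \<in> sym_pow G S n"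
using assms(2,1) proof (induction rule: generate.induct)
  case one then show ?case by (intro exI[of _ 0]) simp
next
  case (incl h)
  then have "h \<in> sym_gens G S" by (auto simp: sym_gens_def)
  then show ?case using sp_one[OF incl(2)] by blast
next
  case (inv h)
  then have "inv h \<in> sym_gens G S" by (auto simp: sym_gens_def)
  then show ?case using sp_one[OF inv(2)] by blast
next
  case (eng h1 h2) then show ?case using sp_mult by blast
qed

lemma wd_le: "inv g \<otimes> h \<in> sym_pow G S n \<Longrightarrow> word_dist G S g h \<le> n"
  unfolding word_dist_def by (rule Least_le)

lemma wd_mem: "fin_gen_set G S \<Longrightarrow> g \<in> carrier G \<Longrightarrow> h \<in> carrier G
  \<Longrightarrow> inv g \<otimes> h \<in> sym_pow G S (word_dist G S g h)"
  unfolding word_dist_def fin_gen_set_def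
  by (rule LeastI_ex, rule gen_sp) auto

lemma forward:
  assumes fg: "fin_gen_set G S0"
    and tl: "translation_like_Z G (word_dist G S0) act" and tr: "transitive_Z_action G act"
  shows "\<exists>S P. fin_gen_set G S \<and> biinf_ham_path G S P"
proof -
  have ra: "int_right_action G act" and fr: "\<forall>x\<in>carrier G. \<forall>n. act x n = x \<longrightarrow> n = 0"
    and bd: "\<forall>n. \<exists>B. \<forall>x\<in>carrier G. word_dist G S0 x (act x n) \<le> B"
    using tl unfolding translation_like_Z_def by auto
  have ac: "\<And>x n. x \<in> carrier G \<Longrightarrow> act x n \<in> carrier G"
    and a0: "\<And>x. x \<in> carrier G \<Longrightarrow> act x 0 = x"
    and aa: "\<And>x m n. x \<in> carrier G \<Longrightarrow> act x (m + n) = act (act x m) n"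
    using ra unfolding int_right_action_def by auto
  obtain B where B: "\<And>x. x \<in> carrier G \<Longrightarrow> word_dist G S0 x (act x 1) \<le> B" using bd by blast
  have S0: "finite S0" "S0 \<subseteq> carrier G" "generate G S0 = carrier G"
    using fg unfolding fin_gen_set_def by auto
  define S where "S = S0 \<union> (\<Union>n\<in>{..B}. sym_pow G S0 n)"
  have Sc: "S \<subseteq> carrier G" using S0 sp_carrier[OF S0(2)] unfolding S_def by auto
  have "finite S" using S0 sp_finite unfolding S_def by auto
  moreover have "generate G S = carrier G"
  proof
    show "generate G S \<subseteq> carrier G" using Sc by (rule generate_incl)
    show "carrier G \<subseteq> generate G S" using S0(3) mono_generate[of S0 S] unfolding S_def by auto
  qed
  ultimately have fgS: "fin_gen_set G S" using Sc unfolding fin_gen_set_def by auto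
  define x0 where "x0 = \<one>"
  have x0: "x0 \<in> carrier G" unfolding x0_def by simp
  define P where "P i = act x0 i" for i
  have "inj P"
  proof (rule injI)
    fix i j assume "P i = P j"
    then have "act (act x0 j) (i - j) = act x0 j" using aa[OF x0, of j "i - j"] unfolding P_def by simp
    then have "i - j = 0" using fr ac[OF x0] by blast
    then show "i = j" by simp
  qed
  moreover have "P ` UNIV = carrier G"
  proof
    show "P ` UNIV \<subseteq> carrier G" using ac[OF x0] unfolding P_def by auto
    show "carrier G \<subseteq> P ` UNIV"
    proof
      fix y assume "y \<in> carrier G"
      then obtain n where "act x0 n = y" using tr x0 unfolding transitive_Z_action_def by blast
      then show "y \<in> P ` UNIV" unfolding P_def by auto
    qed
  qed
  ultimately have bij: "bij_betw P UNIV (carrier G)" unfolding bij_betw_def by simp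
  have adj: "cay_adj G S (P i) (P (i + 1))" for i
  proof -
    define g where "g = P i"
    define h where "h = P (i + 1)"
    have gc: "g \<in> carrier G" unfolding g_def P_def using ac[OF x0] .
    have hg: "h = act g 1" unfolding h_def g_def P_def using aa[OF x0] by simp
    have hc: "h \<in> carrier G" using hg ac[OF gc] by simp
    have "inv g \<otimes> h \<in> sym_pow G S0 (word_dist G S0 g h)" using wd_mem[OF fg gc hc] .
    moreover have "word_dist G S0 g h \<le> B" using B[OF gc] hg by simp
    ultimately have "inv g \<otimes> h \<in> S" unfolding S_def by auto
    then have "inv g \<otimes> h \<in> sym_gens G S" unfolding sym_gens_def by auto
    moreover have "h = g \<otimes> (inv g \<otimes> h)" using gc hc by (simp add: m_assoc[symmetric])
    ultimately show ?thesis using gc unfolding cay_adj_def g_def h_def by blast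
  qed
  show ?thesis using fgS bij adj unfolding biinf_ham_path_def by blast
qed

lemma backward:
  assumes fg: "fin_gen_set G S0" and fgS: "fin_gen_set G S" and hp: "biinf_ham_path G S P"
  shows "\<exists>act. translation_like_Z G (word_dist G S0) act \<and> transitive_Z_action G act"
proof -
  have bij: "bij_betw P UNIV (carrier G)" and st: "\<And>i. cay_adj G S (P i) (P (i + 1))"
    using hp unfolding biinf_ham_path_def by auto
  have injP: "inj P" using bij bij_betw_def by blast
  have Pc: "\<And>i. P i \<in> carrier G" using bij bij_betwE by blast
  define Q where "Q = inv_into UNIV P"
  have QP: "\<And>i. Q (P i) = i" unfolding Q_def using injP by simp
  have PQ: "\<And>x. x \<in> carrier G \<Longrightarrow> P (Q x) = x" unfolding Q_def
    using bij by (meson bij_betw_inv_into_right)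
  define act where "act x n = P (Q x + n)" for x n
  have S0: "finite S0" "S0 \<subseteq> carrier G" "generate G S0 = carrier G"
    using fg unfolding fin_gen_set_def by auto
  have S: "finite S" "S \<subseteq> carrier G" using fgS unfolding fin_gen_set_def by auto
  have fsg: "finite (sym_gens G S)" using S unfolding sym_gens_def by auto
  have ex: "\<exists>k. s \<in> sym_pow G S0 k" if "s \<in> sym_gens G S" for s
    using gen_sp[OF S0(2)] S0(3) sg_carrier[OF S(2)] that by blast
  define len where "len s = (LEAST k. s \<in> sym_pow G S0 k)" for s
  have len: "s \<in> sym_pow G S0 (len s)" if "s \<in> sym_gens G S" for s
    unfolding len_def using ex[OF that] by (rule LeastI_ex)
  define C where "C = Max (insert 0 (len ` sym_gens G S))"
  have lenC: "len s \<le> C" if "s \<in> sym_gens G S" for s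
    unfolding C_def using fsg that by (intro Max_ge) auto
  have step: "inv (P i) \<otimes> P (i + 1) \<in> sym_gens G S" for i
  proof -
    obtain s where s: "s \<in> sym_gens G S" "P (i + 1) = P i \<otimes> s"
      using st[of i] unfolding cay_adj_def by blast
    have "s \<in> carrier G" using s sg_carrier[OF S(2)] by auto
    then have "inv (P i) \<otimes> P (i + 1) = s" using s Pc by (simp add: m_assoc[symmetric])
    then show ?thesis using s by simp
  qed
  have pos: "\<exists>k \<le> C * m. inv (P i) \<otimes> P (i + int m) \<in> sym_pow G S0 k" for i m
  proof (induction m)
    case 0
    have "inv (P i) \<otimes> P i = \<one>" using Pc by simp
    then show ?case by (intro exI[of _ 0]) simp
  next
    case (Suc m)
    then obtain k where k: "k \<le> C * m" "inv (P i) \<otimes> P (i + int m) \<in> sym_pow G S0 k" by blast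
    define s where "s = inv (P (i + int m)) \<otimes> P (i + int m + 1)"
    have s: "s \<in> sym_gens G S" unfolding s_def by (rule step)
    have "inv (P i) \<otimes> P (i + int (Suc m)) = (inv (P i) \<otimes> P (i + int m)) \<otimes> s"
    proof -
      have e: "i + int (Suc m) = i + int m + 1" by simp
      have "(inv (P i) \<otimes> P (i + int m)) \<otimes> (inv (P (i + int m)) \<otimes> P (i + int m + 1))
          = inv (P i) \<otimes> ((P (i + int m) \<otimes> inv (P (i + int m))) \<otimes> P (i + int m + 1))"
        by (metis Pc inv_closed m_assoc m_closed)
      also have "\<dots> = inv (P i) \<otimes> P (i + int m + 1)"
        by (metis Pc inv_closed m_assoc r_inv l_one)
      finally show ?thesis unfolding s_def e by simp
    qed
    moreover have "(inv (P i) \<otimes> P (i + int m)) \<otimes> s \<in> sym_pow G S0 (k + len s)"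
      using sp_mult[OF S0(2) k(2) len[OF s]] .
    moreover have "k + len s \<le> C * Suc m" using k(1) lenC[OF s] by simp
    ultimately show ?case by metis
  qed
  have bnd: "\<exists>k \<le> C * nat \<bar>n\<bar>. inv (P i) \<otimes> P (i + n) \<in> sym_pow G S0 k" for i n
  proof (cases "n \<ge> 0")
    case True
    then show ?thesis using pos[of "nat n" i] by simp
  next
    case False
    define j where "j = i + n"
    obtain k where k: "k \<le> C * nat \<bar>n\<bar>" "inv (P j) \<otimes> P (j + int (nat \<bar>n\<bar>)) \<in> sym_pow G S0 k"
      using pos[of "nat \<bar>n\<bar>" j] by blast
    have e: "j + int (nat \<bar>n\<bar>) = i" using False unfolding j_def by simp
    have "inv (inv (P j) \<otimes> P i) \<in> sym_pow G S0 k" using sp_inv[OF S0(2)] k e by simp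
    moreover have "inv (inv (P j) \<otimes> P i) = inv (P i) \<otimes> P j" using Pc by (simp add: inv_mult_group)
    ultimately show ?thesis using k(1) unfolding j_def by auto
  qed
  have ra: "int_right_action G act" unfolding int_right_action_def act_def
    using Pc PQ QP by (simp add: add.assoc)
  have fr: "\<forall>x\<in>carrier G. \<forall>n. act x n = x \<longrightarrow> n = 0"
  proof (intro ballI allI impI)
    fix x n assume x: "x \<in> carrier G" and "act x n = x"
    then have "P (Q x + n) = P (Q x)" unfolding act_def using PQ by simp
    then show "n = 0" using injP by (simp add: inj_eq)
  qed
  have bd: "\<forall>n. \<exists>B. \<forall>x\<in>carrier G. word_dist G S0 x (act x n) \<le> B"
  proof
    fix n show "\<exists>B. \<forall>x\<in>carrier G. word_dist G S0 x (act x n) \<le> B"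
    proof (intro exI ballI)
      fix x assume x: "x \<in> carrier G"
      obtain k where k: "k \<le> C * nat \<bar>n\<bar>" "inv (P (Q x)) \<otimes> P (Q x + n) \<in> sym_pow G S0 k"
        using bnd by blast
      have "word_dist G S0 x (act x n) \<le> k" unfolding act_def
        using wd_le k(2) PQ[OF x] by metis
      then show "word_dist G S0 x (act x n) \<le> C * nat \<bar>n\<bar>" using k(1) by simp
    qed
  qed
  have tr: "transitive_Z_action G act" unfolding transitive_Z_action_def act_def
  proof (intro ballI)
    fix x y assume "x \<in> carrier G" "y \<in> carrier G"
    then show "\<exists>n. P (Q x + n) = y" using PQ by (intro exI[of _ "Q y - Q x"]) simp
  qed
  show ?thesis using ra fr bd tr unfolding translation_like_Z_def by blast
qed

end

theorem corollary3p2: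
  fixes G :: "('a, 'b) monoid_scheme" and S0 :: "'a set"
  assumes "group G"
    and "fin_gen_set G S0"
  shows "(\<exists>act. translation_like_Z G (word_dist G S0) act \<and> transitive_Z_action G act)
     \<longleftrightarrow> (\<exists>S P. fin_gen_set G S \<and> biinf_ham_path G S P)"
  using group.forward[OF assms(1,2)] group.backward[OF assms(1,2)] by blast

end
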